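(* Let $V$ be a finite nonempty set of voters, $A$ a finite set of alternatives, and $F:\mathcal{P}(V,A)\to S_2(A)$ a consular election rule satisfying SPP and SPO. Then for every linear order $L$ on $A$ (in particular for every voter's preference order) there is a unique favourite committee of $L$ in the range of $F$.
   Context: A profile assigns to each voter $i\in V$ a linear order $P_i$ on $A$; $P_i'P_{-i}$ replaces voter $i$'s order by $P_i'$. $S_2(A)$ is the set of 2-element subsets of $A$; a consular election rule is a map $F:\mathcal{P}(V,A)\to S_2(A)$. SPO: for all $P$, $i$, $P_i'$, $\mathrm{best}(P_i,F(P))\succeq_i\mathrm{best}(P_i,F(P_i'P_{-i}))$; SPP: same with $\mathrm{worst}$, where $\mathrm{best}(P_i,W)$, $\mathrm{worst}(P_i,W)$ are the $P_i$-best and $P_i$-worst elements of $W$. For a linear order $L$ on $A$ and $X,Y\in S_2(A)$: $X\succeq^O Y$ iff the $L$-best element of $X$ is weakly $L$-above that of $Y$; $X\succeq^P Y$ iff the $L$-worst element of $X$ is weakly $L$-above that of $Y$. A favourite committee of $L$ in $\mathcal{X}\subseteq S_2(A)$ is an element of $\mathcal{X}$ maximal in $\mathcal{X}$ under both $\succeq^O$ and $\succeq^P$. *)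

theory Defs
  imports Main
begin

text \<open>Convention: a (weak) linear order L on A is a relation with linear_order_on A L;
  (x, y) \<in> L means x is weakly preferred to (weakly L-above) y.\<close>

definition profiles :: "'v set \<Rightarrow> 'a set \<Rightarrow> ('v \<Rightarrow> 'a rel) set" where
  "profiles V A = {P. (\<forall>i\<in>V. linear_order_on A (P i)) \<and> (\<forall>i. i \<notin> V \<longrightarrow> P i = {})}"

definition S2 :: "'a set \<Rightarrow> 'a set set" where
  "S2 A = {X. X \<subseteq> A \<and> card X = 2}"

definition best :: "'a rel \<Rightarrow> 'a set \<Rightarrow> 'a" where
  "best L W = (THE x. x \<in> W \<and> (\<forall>y\<in>W. (x, y) \<in> L))"

definition worst :: "'a rel \<Rightarrow> 'a set \<Rightarrow> 'a" where
  "worst L W = (THE x. x \<in> W \<and> (\<forall>y\<in>W. (y, x) \<in> L))"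

definition consular_rule :: "'v set \<Rightarrow> 'a set \<Rightarrow> (('v \<Rightarrow> 'a rel) \<Rightarrow> 'a set) \<Rightarrow> bool" where
  "consular_rule V A F = (\<forall>P\<in>profiles V A. F P \<in> S2 A)"

definition SPO :: "'v set \<Rightarrow> 'a set \<Rightarrow> (('v \<Rightarrow> 'a rel) \<Rightarrow> 'a set) \<Rightarrow> bool" where
  "SPO V A F = (\<forall>P\<in>profiles V A. \<forall>i\<in>V. \<forall>P'. linear_order_on A P' \<longrightarrow>
      (best (P i) (F P), best (P i) (F (P(i := P')))) \<in> P i)"

definition SPP :: "'v set \<Rightarrow> 'a set \<Rightarrow> (('v \<Rightarrow> 'a rel) \<Rightarrow> 'a set) \<Rightarrow> bool" where
  "SPP V A F = (\<forall>P\<in>profiles V A. \<forall>i\<in>V. \<forall>P'. linear_order_on A P' \<longrightarrow>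
      (worst (P i) (F P), worst (P i) (F (P(i := P')))) \<in> P i)"

definition geqO :: "'a rel \<Rightarrow> 'a set \<Rightarrow> 'a set \<Rightarrow> bool" where
  "geqO L X Y = ((best L X, best L Y) \<in> L)"

definition geqP :: "'a rel \<Rightarrow> 'a set \<Rightarrow> 'a set \<Rightarrow> bool" where
  "geqP L X Y = ((worst L X, worst L Y) \<in> L)"

definition favourite_committee :: "'a rel \<Rightarrow> 'a set set \<Rightarrow> 'a set \<Rightarrow> bool" where
  "favourite_committee L \<X> X = (X \<in> \<X> \<and>
     (\<forall>Y\<in>\<X>. geqO L Y X \<longrightarrow> geqO L X Y) \<and>
     (\<forall>Y\<in>\<X>. geqP L Y X \<longrightarrow> geqP L X Y))"

end

theory Submission
  imports Defs
begin

lemma two_set_bw: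
  assumes L: "linear_order_on A L" and X: "X \<in> S2 A"
  shows "\<exists>x y. X = {x,y} \<and> x \<noteq> y \<and> best L X = x \<and> worst L X = y"
proof -
  from X obtain a b where ab: "X = {a,b}" "a \<noteq> b" "a \<in> A" "b \<in> A"
    unfolding S2_def by (auto simp: card_2_iff)
  have refl: "\<And>z. z \<in> A \<Longrightarrow> (z,z) \<in> L" using L
    unfolding linear_order_on_def partial_order_on_def preorder_on_def refl_on_def by blast
  have anti: "antisym L" using L
    unfolding linear_order_on_def partial_order_on_def by blast
  have tot: "(a,b) \<in> L \<or> (b,a) \<in> L" using L ab
    unfolding linear_order_on_def total_on_def by blast
  have gen: "\<exists>x y. X = {x,y} \<and> x \<noteq> y \<and> best L X = x \<and> worst L X = y"
    if h: "X = {x,y}" "x \<noteq> y" "x \<in> A" "y \<in> A" "(x,y) \<in> L" for x y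
  proof -
    have "best L X = x" unfolding best_def
    proof (rule the_equality)
      show "x \<in> X \<and> (\<forall>z\<in>X. (x, z) \<in> L)" using h refl by auto
    next
      fix z assume "z \<in> X \<and> (\<forall>w\<in>X. (z, w) \<in> L)"
      then show "z = x" using h anti unfolding antisym_def by auto
    qed
    moreover have "worst L X = y" unfolding worst_def
    proof (rule the_equality)
      show "y \<in> X \<and> (\<forall>z\<in>X. (z, y) \<in> L)" using h refl by auto
    next
      fix z assume "z \<in> X \<and> (\<forall>w\<in>X. (w, z) \<in> L)"
      then show "z = y" using h anti unfolding antisym_def by auto
    qed
    ultimately show ?thesis using h by blast
  qed
  from tot show ?thesis
  proof
    assume "(a,b) \<in> L" then show ?thesis using gen[of a b] ab by blast
  next
    assume "(b,a) \<in> L" then show ?thesis using gen[of b a] ab by (auto simp: insert_commute)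
  qed
qed

lemma S2_eq:
  assumes L: "linear_order_on A L" and "X \<in> S2 A" "Y \<in> S2 A"
    and "best L X = best L Y" "worst L X = worst L Y"
  shows "X = Y"
  using two_set_bw[OF L assms(2)] two_set_bw[OF L assms(3)] assms(4,5) by auto

lemma monotone_path:
  fixes g :: "'a rel \<Rightarrow> 'a set \<Rightarrow> 'a"
  assumes G: "\<forall>P\<in>profiles V A. \<forall>i\<in>V. \<forall>P'. linear_order_on A P' \<longrightarrow>
      (g (P i) (F P), g (P i) (F (P(i := P')))) \<in> P i"
    and L: "linear_order_on A L" and Q: "Q \<in> profiles V A" and fin: "finite S"
    and R: "(g L (F Q), g L (F Q)) \<in> L"
  shows "S \<subseteq> V \<Longrightarrow> (g L (F (\<lambda>i. if i \<in> S then L else Q i)), g L (F Q)) \<in> L"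
  using fin
proof (induction S rule: finite_induct)
  case empty
  have "(\<lambda>i. if i \<in> {} then L else Q i) = Q" by auto
  then show ?case using R by simp
next
  case (insert k S)
  define PS where "PS = (\<lambda>i. if i \<in> S then L else Q i)"
  define PK where "PK = (\<lambda>i. if i \<in> insert k S then L else Q i)"
  have kV: "k \<in> V" using insert by auto
  have PKp: "PK \<in> profiles V A" using Q L kV insert.prems
    unfolding profiles_def PK_def by auto
  have "linear_order_on A (Q k)" using Q kV unfolding profiles_def by auto
  with G PKp kV have "(g (PK k) (F PK), g (PK k) (F (PK(k := Q k)))) \<in> PK k" by blast
  moreover have "PK k = L" unfolding PK_def by simp
  moreover have "PK(k := Q k) = PS" unfolding PK_def PS_def using insert.hyps by (intro ext) auto
  ultimately have 1: "(g L (F PK), g L (F PS)) \<in> L" by simp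
  have "(g L (F PS), g L (F Q)) \<in> L" using insert unfolding PS_def by auto
  moreover have "trans L" using L
    unfolding linear_order_on_def partial_order_on_def preorder_on_def by blast
  ultimately show ?case using 1 unfolding PK_def by (meson transD)
qed


theorem corollary36:
  fixes V :: "'v set" and A :: "'a set" and F :: "('v \<Rightarrow> 'a rel) \<Rightarrow> 'a set"
  assumes "finite V" and "V \<noteq> {}" and "finite A"
    and "consular_rule V A F" and "SPP V A F" and "SPO V A F"
  shows "\<forall>L. linear_order_on A L \<longrightarrow>
           (\<exists>!X. favourite_committee L (F ` profiles V A) X)"
proof (intro allI impI)
  fix L assume L: "linear_order_on A L"
  define PL where "PL = (\<lambda>i. if i \<in> V then L else ({}::'a rel))"
  have PLp: "PL \<in> profiles V A" using L unfolding PL_def profiles_def by auto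
  have inS2: "\<And>P. P \<in> profiles V A \<Longrightarrow> F P \<in> S2 A"
    using assms(4) unfolding consular_rule_def by blast
  have refl: "\<And>z. z \<in> A \<Longrightarrow> (z,z) \<in> L" using L
    unfolding linear_order_on_def partial_order_on_def preorder_on_def refl_on_def by blast
  have anti: "antisym L" using L
    unfolding linear_order_on_def partial_order_on_def by blast
  have bwA: "best L (F P) \<in> A \<and> worst L (F P) \<in> A" if "P \<in> profiles V A" for P
    using two_set_bw[OF L inS2[OF that]] inS2[OF that] unfolding S2_def by force
  have eqPL: "(\<lambda>i. if i \<in> V then L else Q i) = PL" if "Q \<in> profiles V A" for Q
    using that unfolding PL_def profiles_def by (intro ext) auto
  have bestmax: "(best L (F PL), best L (F Q)) \<in> L" if Q: "Q \<in> profiles V A" for Q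
    using monotone_path[of V A best F L Q V, OF assms(6)[unfolded SPO_def] L Q assms(1)]
      refl bwA[OF Q] eqPL[OF Q] by auto
  have worstmax: "(worst L (F PL), worst L (F Q)) \<in> L" if Q: "Q \<in> profiles V A" for Q
    using monotone_path[of V A worst F L Q V, OF assms(5)[unfolded SPP_def] L Q assms(1)]
      refl bwA[OF Q] eqPL[OF Q] by auto
  have fav: "favourite_committee L (F ` profiles V A) (F PL)"
    unfolding favourite_committee_def geqO_def geqP_def using PLp bestmax worstmax by blast
  show "\<exists>!X. favourite_committee L (F ` profiles V A) X"
  proof (rule ex1I[where a="F PL"])
    show "favourite_committee L (F ` profiles V A) (F PL)" by (rule fav)
  next
    fix X assume X: "favourite_committee L (F ` profiles V A) X"
    then obtain Q where Q: "Q \<in> profiles V A" "X = F Q"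
      unfolding favourite_committee_def by blast
    have "F PL \<in> F ` profiles V A" using PLp by blast
    then have "geqO L X (F PL)" "geqP L X (F PL)"
      using X bestmax[OF Q(1)] worstmax[OF Q(1)]
      unfolding favourite_committee_def geqO_def geqP_def Q(2) by auto
    then have "best L X = best L (F PL)" "worst L X = worst L (F PL)"
      using bestmax[OF Q(1)] worstmax[OF Q(1)] Q(2) anti
      unfolding geqO_def geqP_def antisym_def by blast+
    then show "X = F PL" using S2_eq[OF L] inS2 Q PLp by metis
  qed
qed

end
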